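(* Let $\mathbb{K}=(G,M,I)$ be a formal context and $\mathcal{R}$ a closure system on $G$ with $\mathcal{R}\subseteq\operatorname{Ext}(\mathbb{K})$. Let $$\hat{\mathcal{R}}=\bigvee_{A\in\mathcal{M}(\operatorname{Ext}(\mathbb{K}))\setminus\mathcal{M}(\mathcal{R})}\{A,G\},$$ the join taken in the lattice ${\downarrow}\operatorname{Ext}(\mathbb{K})$. Then $\hat{\mathcal{R}}$ is the inclusion-minimum closure system in ${\downarrow}\operatorname{Ext}(\mathbb{K})$ satisfying $\mathcal{R}\vee\hat{\mathcal{R}}=\operatorname{Ext}(\mathbb{K})$.
   Context: A formal context is a triple $(G,M,I)$ with finite nonempty sets $G$, $M$ and $I\subseteq G\times M$; derivations $A'=\{m\mid\forall a\in A:(a,m)\in I\}$, $B'=\{g\mid\forall b\in B:(g,b)\in I\}$; $\operatorname{Ext}(\mathbb{K})=\{A\subseteq G\mid A''=A\}$. A closure system on $G$ is a family of subsets of $G$ containing $G$ and closed under intersections. ${\downarrow}\operatorname{Ext}(\mathbb{K})$ is the lattice of all closure systems on $G$ contained in $\operatorname{Ext}(\mathbb{K})$, ordered by inclusion; its join of a family is the smallest closure system on $G$ containing the union (an empty join is $\{G\}$). For a closure system $\mathcal{C}$ viewed as a lattice under inclusion, $\mathcal{M}(\mathcal{C})$ denotes its set of meet-irreducible elements ($x\neq\top$ and $x=\bigwedge Y$ implies $x\in Y$). *)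

theory Defs
  imports Main
begin

definition formal_context :: "'g set \<Rightarrow> 'm set \<Rightarrow> ('g \<times> 'm) set \<Rightarrow> bool" where
  "formal_context G M I \<longleftrightarrow> finite G \<and> G \<noteq> {} \<and> finite M \<and> M \<noteq> {} \<and> I \<subseteq> G \<times> M"

definition obj_der :: "'m set \<Rightarrow> ('g \<times> 'm) set \<Rightarrow> 'g set \<Rightarrow> 'm set" where
  "obj_der M I A = {m \<in> M. \<forall>a\<in>A. (a, m) \<in> I}"

definition attr_der :: "'g set \<Rightarrow> ('g \<times> 'm) set \<Rightarrow> 'm set \<Rightarrow> 'g set" where
  "attr_der G I B = {g \<in> G. \<forall>b\<in>B. (g, b) \<in> I}"

definition Ext :: "'g set \<Rightarrow> 'm set \<Rightarrow> ('g \<times> 'm) set \<Rightarrow> 'g set set" where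
  "Ext G M I = {A. A \<subseteq> G \<and> attr_der G I (obj_der M I A) = A}"

(* closure system on G: family of subsets of G containing G, closed under intersections
   (the intersection of the empty subfamily is taken to be G) *)
definition closure_system :: "'g set \<Rightarrow> 'g set set \<Rightarrow> bool" where
  "closure_system G C \<longleftrightarrow> C \<subseteq> Pow G \<and> G \<in> C \<and> (\<forall>S. S \<subseteq> C \<longrightarrow> G \<inter> \<Inter>S \<in> C)"

definition cs_join :: "'g set \<Rightarrow> 'g set set set \<Rightarrow> 'g set set" where
  "cs_join G F = \<Inter>{C. closure_system G C \<and> \<Union>F \<subseteq> C}"

definition meet_irr :: "'g set \<Rightarrow> 'g set set \<Rightarrow> 'g set set" where
  "meet_irr G C = {x \<in> C. x \<noteq> G \<and> (\<forall>Y. Y \<subseteq> C \<longrightarrow> x = G \<inter> \<Inter>Y \<longrightarrow> x \<in> Y)}"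

end

theory Submission
  imports Defs
begin

lemma cs_join_char:
  assumes "\<Union>F \<subseteq> Pow G"
  shows "cs_join G F = {G \<inter> \<Inter>S | S. S \<subseteq> \<Union>F}"
proof
  let ?R = "{G \<inter> \<Inter>S | S. S \<subseteq> \<Union>F}"
  have cs: "closure_system G ?R"
    unfolding closure_system_def
  proof (intro conjI allI impI)
    show "?R \<subseteq> Pow G" by auto
    show "G \<in> ?R" by (rule CollectI, rule exI[of _ "{}"]) auto
  next
    fix S' assume S': "S' \<subseteq> ?R"
    then have "\<forall>x\<in>S'. \<exists>T. x = G \<inter> \<Inter>T \<and> T \<subseteq> \<Union>F" by blast
    then obtain T where T: "\<And>x. x \<in> S' \<Longrightarrow> x = G \<inter> \<Inter>(T x) \<and> T x \<subseteq> \<Union>F" by metis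
    have "G \<inter> \<Inter>S' = G \<inter> \<Inter>(\<Union>x\<in>S'. T x)"
    proof (rule set_eqI)
      fix z show "z \<in> G \<inter> \<Inter>S' \<longleftrightarrow> z \<in> G \<inter> \<Inter>(\<Union>x\<in>S'. T x)"
      proof
        assume "z \<in> G \<inter> \<Inter>S'" then show "z \<in> G \<inter> \<Inter>(\<Union>x\<in>S'. T x)"
          using T by blast
      next
        assume z: "z \<in> G \<inter> \<Inter>(\<Union>x\<in>S'. T x)"
        have "z \<in> x" if "x \<in> S'" for x
        proof -
          have "z \<in> G \<inter> \<Inter>(T x)" using z that by blast
          then show ?thesis using T[OF that] by simp
        qed
        then show "z \<in> G \<inter> \<Inter>S'" using z by blast
      qed
    qed
    moreover have "(\<Union>x\<in>S'. T x) \<subseteq> \<Union>F" using T by blast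
    ultimately show "G \<inter> \<Inter>S' \<in> ?R" by blast
  qed
  have "\<Union>F \<subseteq> ?R"
  proof
    fix X assume X: "X \<in> \<Union>F"
    then have "X = G \<inter> \<Inter>{X}" using assms by auto
    then show "X \<in> ?R" using X by blast
  qed
  with cs show "cs_join G F \<subseteq> ?R" unfolding cs_join_def by blast
  show "?R \<subseteq> cs_join G F"
  proof
    fix X assume "X \<in> ?R"
    then obtain S where S: "X = G \<inter> \<Inter>S" "S \<subseteq> \<Union>F" by blast
    have "X \<in> C" if "closure_system G C" "\<Union>F \<subseteq> C" for C
      using that S unfolding closure_system_def by (metis subset_trans)
    then show "X \<in> cs_join G F" unfolding cs_join_def by blast
  qed
qed

lemma Ext_cs:
  "closure_system G (Ext G M I)"
  unfolding closure_system_def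
proof (intro conjI allI impI)
  show "Ext G M I \<subseteq> Pow G" unfolding Ext_def by auto
  show "G \<in> Ext G M I" unfolding Ext_def attr_der_def obj_der_def by auto
next
  fix S assume S: "S \<subseteq> Ext G M I"
  let ?X = "G \<inter> \<Inter>S"
  have "attr_der G I (obj_der M I ?X) \<subseteq> ?X"
  proof
    fix g assume g: "g \<in> attr_der G I (obj_der M I ?X)"
    have "g \<in> A" if "A \<in> S" for A
    proof -
      have A: "A \<subseteq> G" "attr_der G I (obj_der M I A) = A" using S that unfolding Ext_def by auto
      have "obj_der M I A \<subseteq> obj_der M I ?X" using that unfolding obj_der_def by auto
      then have "g \<in> attr_der G I (obj_der M I A)" using g unfolding attr_der_def by auto
      then show ?thesis using A by simp
    qed
    moreover have "g \<in> G" using g unfolding attr_der_def by auto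
    ultimately show "g \<in> ?X" by blast
  qed
  moreover have "?X \<subseteq> attr_der G I (obj_der M I ?X)"
    unfolding attr_der_def obj_der_def by auto
  ultimately show "?X \<in> Ext G M I" unfolding Ext_def by auto
qed

lemma mi_rep:
  assumes fin: "finite G" and C: "closure_system G C" and E: "E \<in> C"
  shows "E = G \<inter> \<Inter>{m \<in> meet_irr G C. E \<subseteq> m}"
proof -
  have "\<forall>E. E \<in> C \<longrightarrow> card (G - E) = n \<longrightarrow> E = G \<inter> \<Inter>{m \<in> meet_irr G C. E \<subseteq> m}" for n
  proof (induct n rule: less_induct)
    case (less n)
    show ?case
    proof (intro allI impI)
      fix E assume EC: "E \<in> C" and n: "card (G - E) = n"
      have EG: "E \<subseteq> G" using C EC unfolding closure_system_def by auto
      let ?X = "G \<inter> \<Inter>{m \<in> meet_irr G C. E \<subseteq> m}"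
      have "?X \<subseteq> E"
      proof (cases "E = G")
        case True then show ?thesis by auto
      next
        case False
        show ?thesis
        proof (cases "E \<in> meet_irr G C")
          case True then show ?thesis by auto
        next
          case nmi: False
          then obtain Y where Y: "Y \<subseteq> C" "E = G \<inter> \<Inter>Y" "E \<notin> Y"
            using False EC unfolding meet_irr_def by auto
          have "?X \<subseteq> y" if yY: "y \<in> Y" for y
          proof -
            have yC: "y \<in> C" using Y yY by auto
            have yG: "y \<subseteq> G" using C yC unfolding closure_system_def by auto
            have Ey: "E \<subset> y" using Y yY by auto
            have "G - y \<subset> G - E" using Ey yG EG by auto
            then have "card (G - y) < n" using n fin by (metis finite_Diff psubset_card_mono)
            then have "y = G \<inter> \<Inter>{m \<in> meet_irr G C. y \<subseteq> m}" using less yC by blast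
            moreover have "{m \<in> meet_irr G C. y \<subseteq> m} \<subseteq> {m \<in> meet_irr G C. E \<subseteq> m}"
              using Ey by auto
            then have "?X \<subseteq> G \<inter> \<Inter>{m \<in> meet_irr G C. y \<subseteq> m}"
              by (intro Int_mono subset_refl Inter_anti_mono)
            ultimately show ?thesis by simp
          qed
          then show ?thesis using Y by blast
        qed
      qed
      moreover have "E \<subseteq> ?X" using EG by auto
      ultimately show "E = ?X" by blast
    qed
  qed
  then show ?thesis using E by blast
qed

lemma join_cs_gen:
  assumes "\<Union>F \<subseteq> Pow G"
  shows "closure_system G (cs_join G F)"
proof -
  let ?Fam = "{C. closure_system G C \<and> \<Union>F \<subseteq> C}"
  have PG: "Pow G \<in> ?Fam" using assms unfolding closure_system_def by auto
  have 1: "cs_join G F \<subseteq> Pow G" unfolding cs_join_def using PG by blast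
  have 2: "G \<in> cs_join G F" unfolding cs_join_def closure_system_def by blast
  have 3: "G \<inter> \<Inter>S \<in> cs_join G F" if S: "S \<subseteq> cs_join G F" for S
  proof -
    have "G \<inter> \<Inter>S \<in> C" if C: "C \<in> ?Fam" for C
    proof -
      have "S \<subseteq> C" using S C unfolding cs_join_def by blast
      then show ?thesis using C unfolding closure_system_def by blast
    qed
    then show ?thesis unfolding cs_join_def by blast
  qed
  show ?thesis unfolding closure_system_def using 1 2 3 by blast
qed

theorem lemma2:
  fixes G :: "'g set" and M :: "'m set" and I :: "('g \<times> 'm) set"
    and R Rhat :: "'g set set"
  assumes "formal_context G M I"
    and "closure_system G R"
    and "R \<subseteq> Ext G M I"
    and "Rhat = cs_join G {{A, G} | A. A \<in> meet_irr G (Ext G M I) - meet_irr G R}"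
  shows "closure_system G Rhat \<and> Rhat \<subseteq> Ext G M I \<and> cs_join G {R, Rhat} = Ext G M I
    \<and> (\<forall>S. closure_system G S \<and> S \<subseteq> Ext G M I \<and> cs_join G {R, S} = Ext G M I
           \<longrightarrow> Rhat \<subseteq> S)"
proof -
  let ?E = "Ext G M I"
  let ?D = "meet_irr G ?E - meet_irr G R"
  let ?F = "{{A, G} | A. A \<in> ?D}"
  have fin: "finite G" using assms(1) unfolding formal_context_def by auto
  have Ecs: "closure_system G ?E" by (rule Ext_cs)
  have EP: "?E \<subseteq> Pow G" using Ecs unfolding closure_system_def by auto
  have GE: "G \<in> ?E" using Ecs unfolding closure_system_def by auto
  have DE: "?D \<subseteq> ?E" unfolding meet_irr_def by auto
  have UF: "\<Union>?F \<subseteq> ?E" using DE GE by auto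
  have Rh: "Rhat = {G \<inter> \<Inter>S | S. S \<subseteq> \<Union>?F}"
    unfolding assms(4) by (rule cs_join_char) (use UF EP in blast)
  have join_sub: "cs_join G F \<subseteq> ?E" if "\<Union>F \<subseteq> ?E" for F
    using that Ecs unfolding cs_join_def by blast
  note join_cs = join_cs_gen
  have c1: "closure_system G Rhat" unfolding assms(4) by (rule join_cs) (use UF EP in blast)
  have c2: "Rhat \<subseteq> ?E" unfolding assms(4) by (rule join_sub[OF UF])
  have RE: "\<Union>{R, Rhat} \<subseteq> ?E" using assms(3) c2 by auto
  have c3: "cs_join G {R, Rhat} = ?E"
  proof
    show "cs_join G {R, Rhat} \<subseteq> ?E" by (rule join_sub[OF RE])
    have J: "cs_join G {R, Rhat} = {G \<inter> \<Inter>S | S. S \<subseteq> \<Union>{R, Rhat}}"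
      by (rule cs_join_char) (use RE EP in blast)
    show "?E \<subseteq> cs_join G {R, Rhat}"
    proof
      fix X assume X: "X \<in> ?E"
      have "{m \<in> meet_irr G ?E. X \<subseteq> m} \<subseteq> R \<union> Rhat"
      proof
        fix m assume m: "m \<in> {m \<in> meet_irr G ?E. X \<subseteq> m}"
        show "m \<in> R \<union> Rhat"
        proof (cases "m \<in> meet_irr G R")
          case True then show ?thesis unfolding meet_irr_def by auto
        next
          case False
          then have "m \<in> \<Union>?F" using m by blast
          moreover have "m = G \<inter> \<Inter>{m}" using m EP unfolding meet_irr_def by auto
          ultimately show ?thesis using Rh by blast
        qed
      qed
      then show "X \<in> cs_join G {R, Rhat}"
        using mi_rep[OF fin Ecs X] J by auto
    qed
  qed
  have c4: "Rhat \<subseteq> S" if S: "closure_system G S" "S \<subseteq> ?E" "cs_join G {R, S} = ?E" for S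
  proof -
    have RS: "\<Union>{R, S} \<subseteq> Pow G" using assms(3) S(2) EP by auto
    have J: "?E = {G \<inter> \<Inter>T | T. T \<subseteq> \<Union>{R, S}}"
      unfolding S(3)[symmetric] by (rule cs_join_char[OF RS])
    have "\<Union>?F \<subseteq> S"
    proof
      fix A assume "A \<in> \<Union>?F"
      then obtain B where B: "B \<in> ?D" "A = B \<or> A = G" by blast
      show "A \<in> S"
      proof (cases "A = G")
        case True then show ?thesis using S(1) unfolding closure_system_def by auto
      next
        case False
        then have AB: "A = B" using B by auto
        then have AE: "A \<in> ?E" using DE B by auto
        have "A \<in> {G \<inter> \<Inter>T | T. T \<subseteq> \<Union>{R, S}}" using AE J by simp
        then obtain T where T: "A = G \<inter> \<Inter>T" "T \<subseteq> \<Union>{R, S}" by blast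
        have "T \<subseteq> ?E" using T(2) assms(3) S(2) by blast
        have MI: "\<forall>Y. Y \<subseteq> ?E \<longrightarrow> A = G \<inter> \<Inter>Y \<longrightarrow> A \<in> Y"
          using B(1) AB unfolding meet_irr_def by simp
        have AT: "A \<in> T" using MI \<open>T \<subseteq> ?E\<close> T(1) by blast
        have "A \<notin> R"
        proof
          assume AR: "A \<in> R"
          have "A \<in> meet_irr G R"
            unfolding meet_irr_def
          proof (intro CollectI conjI allI impI)
            show "A \<in> R" by fact
            show "A \<noteq> G" by fact
            fix Y assume "Y \<subseteq> R" "A = G \<inter> \<Inter>Y"
            then show "A \<in> Y" using MI assms(3) by blast
          qed
          then show False using B AB by auto
        qed
        then show ?thesis using AT T(2) by blast
      qed
    qed
    show ?thesis
    proof
      fix X assume "X \<in> Rhat"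
      then obtain T where T: "X = G \<inter> \<Inter>T" "T \<subseteq> \<Union>?F" using Rh by blast
      have "T \<subseteq> S" using T(2) \<open>\<Union>?F \<subseteq> S\<close> by (rule subset_trans)
      then show "X \<in> S" using S(1) T(1) unfolding closure_system_def by blast
    qed
  qed
  show ?thesis using c1 c2 c3 c4 by blast
qed

end
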